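(* Let $C$ be an octonion algebra over a field $k$ with $\mathrm{char}(k)\neq2$, and $G=\mathrm{Aut}(C)$. Let $s,t\in G(k)$ be elements of order $2$, and let $D$ (resp. $D'$) be the quaternion subalgebra of $C$ fixed elementwise by $t$ (resp. $s$). Then $s$ and $t$ are conjugate in $G(k)$ if and only if $D\cong D'$ as $k$-algebras.
   Context: An octonion algebra is an $8$-dimensional composition algebra, i.e. a unital $k$-algebra with a nondegenerate multiplicative quadratic form $N$. A quaternion subalgebra is a $4$-dimensional composition subalgebra containing the identity. Every element of order $2$ in $\mathrm{Aut}(C)$ fixes elementwise exactly a quaternion subalgebra $D$ (its $+1$-eigenspace) and acts by $-1$ on $D^\perp$. *)

theory Defs
  imports Complex_Main
begin

text \<open>An algebra over a field 'k is given by a carrier type 'c (an abelian group),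
 a scalar multiplication scale, a (not necessarily associative) product mult.\<close>

definition polar :: "('c::ab_group_add \<Rightarrow> 'k::field) \<Rightarrow> 'c \<Rightarrow> 'c \<Rightarrow> 'k" where
  "polar N x y = N (x + y) - N x - N y"

definition quadratic_form :: "('k::field \<Rightarrow> 'c::ab_group_add \<Rightarrow> 'c) \<Rightarrow> ('c \<Rightarrow> 'k) \<Rightarrow> bool" where
  "quadratic_form scale N \<longleftrightarrow>
     (\<forall>a x. N (scale a x) = a * a * N x) \<and>
     (\<forall>y. Vector_Spaces.linear scale (*) (\<lambda>x. polar N x y)) \<and>
     (\<forall>x. Vector_Spaces.linear scale (*) (\<lambda>y. polar N x y))"

definition nondegenerate :: "('c::ab_group_add \<Rightarrow> 'k::field) \<Rightarrow> bool" where
  "nondegenerate N \<longleftrightarrow> (\<forall>x. (\<forall>y. polar N x y = 0) \<longrightarrow> x = 0)"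

definition unital_algebra ::
  "('k::field \<Rightarrow> 'c::ab_group_add \<Rightarrow> 'c) \<Rightarrow> ('c \<Rightarrow> 'c \<Rightarrow> 'c) \<Rightarrow> 'c \<Rightarrow> bool" where
  "unital_algebra scale mult e \<longleftrightarrow>
     vector_space scale \<and>
     (\<forall>x. Vector_Spaces.linear scale scale (mult x)) \<and>
     (\<forall>y. Vector_Spaces.linear scale scale (\<lambda>x. mult x y)) \<and>
     (\<forall>x. mult e x = x \<and> mult x e = x)"

definition octonion_algebra ::
  "('k::field \<Rightarrow> 'c::ab_group_add \<Rightarrow> 'c) \<Rightarrow> ('c \<Rightarrow> 'c \<Rightarrow> 'c) \<Rightarrow> 'c \<Rightarrow> ('c \<Rightarrow> 'k) \<Rightarrow> bool" where
  "octonion_algebra scale mult e N \<longleftrightarrow>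
     unital_algebra scale mult e \<and>
     vector_space.dim scale (UNIV :: 'c set) = 8 \<and>
     quadratic_form scale N \<and> nondegenerate N \<and>
     (\<forall>x y. N (mult x y) = N x * N y)"

text \<open>k-points of the automorphism group scheme Aut(C).\<close>
definition is_aut ::
  "('k::field \<Rightarrow> 'c::ab_group_add \<Rightarrow> 'c) \<Rightarrow> ('c \<Rightarrow> 'c \<Rightarrow> 'c) \<Rightarrow> ('c \<Rightarrow> 'c) \<Rightarrow> bool" where
  "is_aut scale mult g \<longleftrightarrow> bij g \<and> Vector_Spaces.linear scale scale g \<and>
     (\<forall>x y. g (mult x y) = mult (g x) (g y))"

definition order_two :: "('c \<Rightarrow> 'c) \<Rightarrow> bool" where
  "order_two g \<longleftrightarrow> g \<circ> g = id \<and> g \<noteq> id"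

definition fixed_subalgebra :: "('c \<Rightarrow> 'c) \<Rightarrow> 'c set" where
  "fixed_subalgebra g = {x. g x = x}"

definition alg_iso_on ::
  "('k::field \<Rightarrow> 'c::ab_group_add \<Rightarrow> 'c) \<Rightarrow> ('c \<Rightarrow> 'c \<Rightarrow> 'c) \<Rightarrow> 'c \<Rightarrow> 'c set \<Rightarrow> 'c set \<Rightarrow> ('c \<Rightarrow> 'c) \<Rightarrow> bool" where
  "alg_iso_on scale mult e A B f \<longleftrightarrow> bij_betw f A B \<and>
     (\<forall>x\<in>A. \<forall>y\<in>A. f (x + y) = f x + f y) \<and>
     (\<forall>a. \<forall>x\<in>A. f (scale a x) = scale a (f x)) \<and>
     (\<forall>x\<in>A. \<forall>y\<in>A. f (mult x y) = mult (f x) (f y)) \<and>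
     f e = e"

end

theory Submission
  imports Defs
begin

locale comp =
  fixes scale :: "'k::field \<Rightarrow> 'c::ab_group_add \<Rightarrow> 'c" (infixr "\<star>" 75)
    and mult :: "'c \<Rightarrow> 'c \<Rightarrow> 'c" (infixl "\<odot>" 70)
    and e :: 'c and N :: "'c \<Rightarrow> 'k"
  assumes vs: "vector_space scale"
    and ml: "\<And>x. Vector_Spaces.linear scale scale (mult x)"
    and mr: "\<And>y. Vector_Spaces.linear scale scale (\<lambda>x. mult x y)"
    and unitl[simp]: "\<And>x. e \<odot> x = x" and unitr[simp]: "\<And>x. x \<odot> e = x"
    and qf: "quadratic_form scale N"
    and nd: "nondegenerate N"
    and multN: "\<And>x y. N (x \<odot> y) = N x * N y"
    and two: "(2::'k) \<noteq> 0"
    and nontriv: "\<exists>x::'c. x \<noteq> 0"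
    and dim8: "vector_space.dim scale (UNIV::'c set) = 8"
begin

sublocale V: vector_space scale by (rule vs)

lemma mhl: "module_hom scale scale (mult x)" using module_hom_linearI[OF ml] .
lemma mhr: "module_hom scale scale (\<lambda>x. mult x y)" using module_hom_linearI[OF mr] .

lemma madd_r[simp]: "x \<odot> (y + z) = x \<odot> y + x \<odot> z" using module_hom.add[OF mhl] .
lemma madd_l[simp]: "(y + z) \<odot> x = y \<odot> x + z \<odot> x" using module_hom.add[OF mhr] by simp
lemma mscale_r[simp]: "x \<odot> (a \<star> y) = a \<star> (x \<odot> y)" using module_hom.scale[OF mhl] .
lemma mscale_l[simp]: "(a \<star> y) \<odot> x = a \<star> (y \<odot> x)" using module_hom.scale[OF mhr] by simp
lemma mzero_r[simp]: "x \<odot> 0 = 0" using module_hom.zero[OF mhl] .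
lemma mzero_l[simp]: "0 \<odot> x = 0" using module_hom.zero[OF mhr] by simp
lemma mneg_r[simp]: "x \<odot> (- y) = - (x \<odot> y)" using module_hom.neg[OF mhl] .
lemma mneg_l[simp]: "(- y) \<odot> x = - (y \<odot> x)" using module_hom.neg[OF mhr] by simp
lemma mdiff_r[simp]: "x \<odot> (y - z) = x \<odot> y - x \<odot> z" using module_hom.diff[OF mhl] .
lemma mdiff_l[simp]: "(y - z) \<odot> x = y \<odot> x - z \<odot> x" using module_hom.diff[OF mhr] by simp

abbreviation B where "B \<equiv> polar N"

lemma Nscale[simp]: "N (a \<star> x) = a * a * N x" using qf unfolding quadratic_form_def by blast

lemma Bh1: "module_hom scale (*) (\<lambda>x. B x y)"
  using qf unfolding quadratic_form_def by (blast intro: module_hom_linearI)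
lemma Bh2: "module_hom scale (*) (\<lambda>y. B x y)"
  using qf unfolding quadratic_form_def by (blast intro: module_hom_linearI)

lemma Badd1[simp]: "B (x + x') y = B x y + B x' y" using module_hom.add[OF Bh1] by simp
lemma Badd2[simp]: "B y (x + x') = B y x + B y x'" using module_hom.add[OF Bh2] by simp
lemma Bscale1[simp]: "B (a \<star> x) y = a * B x y" using module_hom.scale[OF Bh1] by simp
lemma Bscale2[simp]: "B y (a \<star> x) = a * B y x" using module_hom.scale[OF Bh2] by simp
lemma Bzero1[simp]: "B 0 y = 0" using module_hom.zero[OF Bh1] by simp
lemma Bzero2[simp]: "B y 0 = 0" using module_hom.zero[OF Bh2] by simp
lemma Bneg1[simp]: "B (- x) y = - B x y" using module_hom.neg[OF Bh1] by simp
lemma Bneg2[simp]: "B y (- x) = - B y x" using module_hom.neg[OF Bh2] by simp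
lemma Bdiff1[simp]: "B (x - x') y = B x y - B x' y" using module_hom.diff[OF Bh1] by simp
lemma Bdiff2[simp]: "B y (x - x') = B y x - B y x'" using module_hom.diff[OF Bh2] by simp
lemma Bsym: "B x y = B y x" unfolding polar_def by (simp add: add.commute)

lemma N0[simp]: "N 0 = 0" using Nscale[of 0 0] by simp
lemma Nadd: "N (x + y) = N x + N y + B x y" unfolding polar_def by simp
lemma Nneg[simp]: "N (- x) = N x" using Nscale[of "-1" x] by simp

lemma Bself: "B x x = 2 * N x"
proof -
  have "x + x = (2::'k) \<star> x" by (metis V.scale_left_distrib V.scale_one one_add_one)
  then have "N (x + x) = 4 * N x" by simp
  then show ?thesis unfolding polar_def by simp
qed

lemma nondeg: "(\<And>y. B x y = 0) \<Longrightarrow> x = 0" using nd unfolding nondegenerate_def by blast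

lemma two_cancel: "(2::'k) \<star> x = 2 \<star> y \<Longrightarrow> x = y"
  using two by simp

lemma L2: "B (y \<odot> x) (z \<odot> x) = B y z * N x"
proof -
  have "N ((y + z) \<odot> x) = N (y + z) * N x" by (rule multN)
  then show ?thesis by (simp add: Nadd multN algebra_simps)
qed

lemma L4: "B (y \<odot> x) (z \<odot> w) + B (y \<odot> w) (z \<odot> x) = B y z * B x w"
proof -
  have "B (y \<odot> (x + w)) (z \<odot> (x + w)) = B y z * N (x + w)" by (rule L2)
  then show ?thesis by (simp add: L2 Nadd algebra_simps Bsym[of "y \<odot> w" "z \<odot> x"] Bsym[of w x])
qed

lemma double: "y + y = (2::'k) \<star> y" by (metis V.scale_left_distrib V.scale_one one_add_one)

definition T where "T x = B x e"
definition cj where "cj x = T x \<star> e - x"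

lemma Tadd[simp]: "T (x + y) = T x + T y" and Tscale[simp]: "T (a \<star> x) = a * T x"
  and Tneg[simp]: "T (- x) = - T x" and Tdiff[simp]: "T (x - y) = T x - T y"
  and Tzero[simp]: "T 0 = 0"
  unfolding T_def by simp_all

lemma Ne[simp]: "N e = 1"
proof -
  have ee: "N e = N e * N e" using multN[of e e] by simp
  have "N e \<noteq> 0"
  proof
    assume h: "N e = 0"
    have "N x = 0" for x using multN[of e x] h by simp
    then have "B x y = 0" for x y unfolding polar_def by simp
    then have "x = 0" for x :: 'c using nondeg by metis
    then show False using nontriv by blast
  qed
  then show ?thesis using ee by (metis mult_cancel_left1)
qed

lemma Te[simp]: "T e = 2" unfolding T_def by (simp add: Bself)

lemma adj: "B (u \<odot> w) z = B u (z \<odot> cj w)"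
proof -
  have "B (u \<odot> w) (z \<odot> e) + B (u \<odot> e) (z \<odot> w) = B u z * B w e" by (rule L4)
  then show ?thesis unfolding cj_def T_def by (simp add: algebra_simps)
qed

lemma Tcj[simp]: "T (cj x) = T x" unfolding cj_def by simp
lemma cjcj[simp]: "cj (cj x) = x" unfolding cj_def by simp
lemma cjadd[simp]: "cj (x + y) = cj x + cj y" and cjscale[simp]: "cj (a \<star> x) = a \<star> cj x"
  and cjneg[simp]: "cj (- x) = - cj x"
  unfolding cj_def by (simp_all add: algebra_simps V.scale_left_distrib)

lemma adj2: "B (p \<odot> cj w) v = B p (v \<odot> w)" using adj[of p "cj w" v] by simp

lemma K: "(u \<odot> z) \<odot> cj w + (u \<odot> w) \<odot> cj z = B w z \<star> u"
proof -
  have "B ((u \<odot> z) \<odot> cj w + (u \<odot> w) \<odot> cj z - B w z \<star> u) v = 0" for v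
  proof -
    have "B (u \<odot> z) (v \<odot> w) + B (u \<odot> w) (v \<odot> z) = B u v * B z w" by (rule L4)
    then show ?thesis by (simp add: adj2 Bsym[of z w])
  qed
  then show ?thesis using nondeg by (metis eq_iff_diff_eq_0)
qed

lemma quad: "x \<odot> x = T x \<star> x - N x \<star> e"
proof -
  have "(e \<odot> x) \<odot> cj x + (e \<odot> x) \<odot> cj x = B x x \<star> e" by (rule K)
  then have "(2::'k) \<star> (T x \<star> x - x \<odot> x) = 2 \<star> (N x \<star> e)"
    by (simp add: double cj_def Bself)
  then have "T x \<star> x - x \<odot> x = N x \<star> e" by (rule two_cancel)
  then show ?thesis by (simp add: algebra_simps)
qed

lemma rinv: "(y \<odot> a) \<odot> cj a = N a \<star> y"
proof -
  have "(y \<odot> a) \<odot> cj a + (y \<odot> a) \<odot> cj a = B a a \<star> y" by (rule K)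
  then have "(2::'k) \<star> ((y \<odot> a) \<odot> cj a) = 2 \<star> (N a \<star> y)" by (simp add: double Bself)
  then show ?thesis by (rule two_cancel)
qed

lemma rinvW: assumes "T a = 0" shows "(y \<odot> a) \<odot> a = - (N a \<star> y)"
proof -
  have "- (y \<odot> a \<odot> a) = N a \<star> y" using rinv[of y a] assms by (simp add: cj_def)
  then show ?thesis by (metis minus_minus)
qed

lemma Ubasis: obtains U where "finite U" "card U = 8" "UNIV \<subseteq> V.span U"
proof -
  obtain U where "U \<subseteq> UNIV" "V.independent U" "UNIV \<subseteq> V.span U" "card U = V.dim UNIV"
    by (rule V.basis_exists)
  then show ?thesis using that dim8 by (metis card.infinite zero_neq_numeral)
qed

lemma indep_bound: "V.independent S \<Longrightarrow> finite S \<and> card S \<le> 8"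
proof -
  assume i: "V.independent S"
  obtain U where "finite U" "card U = 8" "UNIV \<subseteq> V.span U" by (rule Ubasis)
  then show ?thesis using V.independent_span_bound[OF _ i, of U] by auto
qed

lemma span_bound: "UNIV \<subseteq> V.span S \<Longrightarrow> finite S \<Longrightarrow> 8 \<le> card S"
  using V.dim_le_card[of UNIV S] dim8 by simp

lemma indep_union_aux:
  assumes iA: "V.independent A" and AU: "A \<subseteq> U" and BU: "B' \<subseteq> U'"
    and sU: "V.subspace U" and sU': "V.subspace U'"
    and disj: "\<And>w. w \<in> U \<Longrightarrow> w \<in> U' \<Longrightarrow> w = 0"
    and a: "a \<in> A"
  shows "a \<notin> V.span ((A \<union> B') - {a})"
proof
  assume h: "a \<in> V.span ((A \<union> B') - {a})"
  have aB: "a \<notin> B'"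
  proof
    assume "a \<in> B'"
    then have "a = 0" using disj a AU BU by auto
    then show False using iA a V.dependent_zero by blast
  qed
  have "(A \<union> B') - {a} = (A - {a}) \<union> B'" using aB by auto
  with h have "a \<in> V.span ((A - {a}) \<union> B')" by simp
  then have "a \<in> {x + y |x y. x \<in> V.span (A - {a}) \<and> y \<in> V.span B'}" by (simp only: V.span_Un)
  then obtain x y where xy: "a = x + y" "x \<in> V.span (A - {a})" "y \<in> V.span B'"
    by blast
  have xU: "x \<in> U" using xy(2) V.span_minimal[OF _ sU, of "A - {a}"] AU by auto
  have yU': "y \<in> U'" using xy(3) V.span_minimal[OF _ sU', of B'] BU by auto
  have "y = a - x" using xy(1) by simp
  then have "y \<in> U" using xU a AU sU by (auto intro: V.subspace_diff)
  then have "y = 0" using yU' disj by blast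
  then have "a \<in> V.span (A - {a})" using xy by simp
  then show False using iA a unfolding V.dependent_def by blast
qed

lemma indep_union:
  assumes iA: "V.independent A" and iB: "V.independent B'" and AU: "A \<subseteq> U" and BU: "B' \<subseteq> U'"
    and sU: "V.subspace U" and sU': "V.subspace U'"
    and disj: "\<And>w. w \<in> U \<Longrightarrow> w \<in> U' \<Longrightarrow> w = 0"
  shows "V.independent (A \<union> B')"
  unfolding V.dependent_def
proof
  assume "\<exists>a\<in>A \<union> B'. a \<in> V.span (A \<union> B' - {a})"
  then obtain a where a: "a \<in> A \<union> B'" "a \<in> V.span (A \<union> B' - {a})" by blast
  show False
  proof (cases "a \<in> A")
    case True
    then show False using indep_union_aux[OF iA AU BU sU sU' disj] a by blast
  next
    case False
    then have "a \<in> B'" using a by blast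
    moreover have "B' \<union> A = A \<union> B'" by blast
    ultimately show False using indep_union_aux[OF iB BU AU sU' sU, of a] disj a by metis
  qed
qed

lemma subC0: "V.subspace {x. T x = 0}" unfolding V.subspace_def by auto

end

locale invol = comp scale mult e N
  for scale :: "'k::field \<Rightarrow> 'c::ab_group_add \<Rightarrow> 'c" (infixr "\<star>" 75)
    and mult :: "'c \<Rightarrow> 'c \<Rightarrow> 'c" (infixl "\<odot>" 70)
    and e :: 'c and N :: "'c \<Rightarrow> 'k" +
  fixes t :: "'c \<Rightarrow> 'c"
  assumes tlin: "Vector_Spaces.linear scale scale t"
    and tmult: "\<And>x y. t (x \<odot> y) = t x \<odot> t y"
    and tt[simp]: "\<And>x. t (t x) = x"
    and tnid: "\<exists>x. t x \<noteq> x"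
begin

lemma th: "module_hom scale scale t" using module_hom_linearI[OF tlin] .
lemma tadd[simp]: "t (x + y) = t x + t y" using module_hom.add[OF th] .
lemma tscale[simp]: "t (a \<star> x) = a \<star> t x" using module_hom.scale[OF th] .
lemma tzero[simp]: "t 0 = 0" using module_hom.zero[OF th] .
lemma tneg[simp]: "t (- x) = - t x" using module_hom.neg[OF th] .
lemma tdiff[simp]: "t (x - y) = t x - t y" using module_hom.diff[OF th] .

lemma te[simp]: "t e = e"
proof -
  have "t (e \<odot> t e) = t e \<odot> t (t e)" by (rule tmult)
  then show ?thesis by simp
qed

definition D where "D = {x. t x = x}"
definition W where "W = {x. t x = - x}"

lemma eD[simp]: "e \<in> D" unfolding D_def by simp
lemma D0[simp]: "0 \<in> D" unfolding D_def by simp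
lemma W0[simp]: "0 \<in> W" unfolding W_def by simp
lemma Dadd: "x \<in> D \<Longrightarrow> y \<in> D \<Longrightarrow> x + y \<in> D" unfolding D_def by simp
lemma Ddiff: "x \<in> D \<Longrightarrow> y \<in> D \<Longrightarrow> x - y \<in> D" unfolding D_def by simp
lemma Dneg: "x \<in> D \<Longrightarrow> - x \<in> D" unfolding D_def by simp
lemma Dscale: "x \<in> D \<Longrightarrow> a \<star> x \<in> D" unfolding D_def by simp
lemma Wadd: "x \<in> W \<Longrightarrow> y \<in> W \<Longrightarrow> x + y \<in> W" unfolding W_def by simp
lemma Wdiff: "x \<in> W \<Longrightarrow> y \<in> W \<Longrightarrow> x - y \<in> W" unfolding W_def by simp
lemma Wneg: "x \<in> W \<Longrightarrow> - x \<in> W" unfolding W_def by simp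
lemma Wscale: "x \<in> W \<Longrightarrow> a \<star> x \<in> W" unfolding W_def by simp
lemma DD: "x \<in> D \<Longrightarrow> y \<in> D \<Longrightarrow> x \<odot> y \<in> D" unfolding D_def by (simp add: tmult)
lemma DW: "x \<in> D \<Longrightarrow> y \<in> W \<Longrightarrow> x \<odot> y \<in> W" unfolding D_def W_def by (simp add: tmult)
lemma WD: "x \<in> W \<Longrightarrow> y \<in> D \<Longrightarrow> x \<odot> y \<in> W" unfolding D_def W_def by (simp add: tmult)
lemma WW: "x \<in> W \<Longrightarrow> y \<in> W \<Longrightarrow> x \<odot> y \<in> D" unfolding D_def W_def by (simp add: tmult)
lemma cjD: "x \<in> D \<Longrightarrow> cj x \<in> D" unfolding cj_def by (intro Ddiff Dscale eD)

lemma subD: "V.subspace D" unfolding V.subspace_def by (auto intro: Dadd Dscale)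
lemma subW: "V.subspace W" unfolding V.subspace_def by (auto intro: Wadd Wscale)

lemma TW: "x \<in> W \<Longrightarrow> T x = 0"
proof -
  assume x: "x \<in> W"
  then have tx: "t x = - x" unfolding W_def by simp
  have q: "x \<odot> x = T x \<star> x - N x \<star> e" by (rule quad)
  have "t (x \<odot> x) = x \<odot> x" by (simp add: tmult tx)
  then have "t (T x \<star> x - N x \<star> e) = T x \<star> x - N x \<star> e" by (simp only: q)
  then have "- (T x \<star> x) = T x \<star> x" by (simp add: tx)
  then have "T x \<star> x + T x \<star> x = 0" by (metis add.commute neg_eq_iff_add_eq_0)
  then have "(2 * T x) \<star> x = 0" by (simp add: double)
  then have "x = 0 \<or> T x = 0" using two by auto
  then show "T x = 0" by auto
qed

lemma cjW: "x \<in> W \<Longrightarrow> cj x = - x" unfolding cj_def by (simp add: TW)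

lemma BDW: "x \<in> D \<Longrightarrow> y \<in> W \<Longrightarrow> B x y = 0"
proof -
  assume x: "x \<in> D" and y: "y \<in> W"
  have "B x y = B (e \<odot> x) y" by simp
  also have "\<dots> = B e (y \<odot> cj x)" by (rule adj)
  also have "\<dots> = T (y \<odot> cj x)" unfolding T_def by (rule Bsym)
  also have "\<dots> = 0" using WD[OF y cjD[OF x]] by (rule TW)
  finally show ?thesis .
qed

lemma BWD: "x \<in> D \<Longrightarrow> y \<in> W \<Longrightarrow> B y x = 0" using BDW Bsym by metis

definition P where "P x = (1/2::'k) \<star> (x + t x)"
definition R where "R x = (1/2::'k) \<star> (x - t x)"

lemma PD: "P x \<in> D" unfolding P_def D_def by (simp add: add.commute)
lemma RW: "R x \<in> W" unfolding R_def W_def by (simp add: algebra_simps)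
lemma PR: "P x + R x = x"
proof -
  have "P x + R x = (1/2::'k) \<star> (x + x)" unfolding P_def R_def by (simp add: algebra_simps)
  also have "\<dots> = x" using two by (simp add: double)
  finally show ?thesis .
qed

lemma half_double: "(1/2::'k) \<star> (y + y) = y" using two by (simp add: double)

lemma exW: "\<exists>a\<in>W. N a \<noteq> 0"
proof (rule ccontr)
  assume h: "\<not> ?thesis"
  then have NW: "\<And>a. a \<in> W \<Longrightarrow> N a = 0" by blast
  have BW: "B u v = 0" if "u \<in> W" "v \<in> W" for u v
    using NW[OF that(1)] NW[OF that(2)] NW[OF Wadd[OF that]] unfolding polar_def by simp
  obtain x where x: "t x \<noteq> x" using tnid by blast
  have "R x \<noteq> 0"
  proof
    assume "R x = 0"
    then have "P x = x" using PR[of x] by simp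
    then have "t x = x" using PD[of x] unfolding D_def by simp
    with x show False by simp
  qed
  moreover have "B (R x) y = 0" for y
  proof -
    have "B (R x) y = B (R x) (P y) + B (R x) (R y)" by (simp flip: Badd2 add: PR)
    then show ?thesis using BWD[OF PD RW] BW[OF RW RW] by simp
  qed
  ultimately show False using nondeg by blast
qed

lemma c1: "x \<in> D \<Longrightarrow> a \<in> W \<Longrightarrow> (y \<odot> x) \<odot> a = (y \<odot> a) \<odot> cj x"
  using K[of y a x] by (simp add: cjW BDW algebra_simps)

lemma c2: "x \<in> D \<Longrightarrow> y \<in> D \<Longrightarrow> a \<in> W \<Longrightarrow> x \<odot> (y \<odot> a) = (y \<odot> x) \<odot> a"
proof -
  assume x: "x \<in> D" and y: "y \<in> D" and a: "a \<in> W"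
  have ya: "y \<odot> a \<in> W" by (rule DW[OF y a])
  have "(e \<odot> x) \<odot> cj (y \<odot> a) + (e \<odot> (y \<odot> a)) \<odot> cj x = B (y \<odot> a) x \<star> e" by (rule K)
  then have "x \<odot> (y \<odot> a) = (y \<odot> a) \<odot> cj x" using ya x by (simp add: cjW BWD algebra_simps)
  then show ?thesis using c1[OF x a] by simp
qed

lemma c3: "u \<in> D \<Longrightarrow> a \<in> W \<Longrightarrow> (y \<odot> a) \<odot> u = (y \<odot> cj u) \<odot> a"
  using c1[OF cjD, of u a y] by simp

lemma c4: "x \<in> D \<Longrightarrow> y \<in> D \<Longrightarrow> a \<in> W \<Longrightarrow> (x \<odot> a) \<odot> (y \<odot> a) = - (N a \<star> (cj y \<odot> x))"
proof -
  assume x: "x \<in> D" and y: "y \<in> D" and a: "a \<in> W"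
  have ya: "y \<odot> a \<in> W" by (rule DW[OF y a])
  have "(x \<odot> a) \<odot> cj (y \<odot> a) + (x \<odot> (y \<odot> a)) \<odot> cj a = B (y \<odot> a) a \<star> x" by (rule K)
  moreover have "B (y \<odot> a) a = T y * N a" using L2[of y a e] by (simp add: T_def)
  moreover have "(x \<odot> (y \<odot> a)) \<odot> a = - (N a \<star> (y \<odot> x))"
    using c2[OF x y a] rinvW[OF TW[OF a]] by simp
  ultimately have "- ((x \<odot> a) \<odot> (y \<odot> a)) + N a \<star> (y \<odot> x) = (T y * N a) \<star> x"
    using ya a by (simp add: cjW)
  then show ?thesis unfolding cj_def by (simp add: algebra_simps)
qed

lemma prod: "x \<in> D \<Longrightarrow> y \<in> D \<Longrightarrow> u \<in> D \<Longrightarrow> v \<in> D \<Longrightarrow> a \<in> W \<Longrightarrow>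
  (x + y \<odot> a) \<odot> (u + v \<odot> a) = (x \<odot> u - N a \<star> (cj v \<odot> y)) + (v \<odot> x + y \<odot> cj u) \<odot> a"
  by (simp add: c2 c3 c4 algebra_simps)

definition Q where "Q a z = - ((1 / N a) \<star> (R z \<odot> a))"

lemma QD: "a \<in> W \<Longrightarrow> Q a z \<in> D" unfolding Q_def by (intro Dneg Dscale WW RW)

lemma decomp: "a \<in> W \<Longrightarrow> N a \<noteq> 0 \<Longrightarrow> z = P z + Q a z \<odot> a"
proof -
  assume a: "a \<in> W" "N a \<noteq> 0"
  have "Q a z \<odot> a = R z" unfolding Q_def using a by (simp add: rinvW TW)
  then show ?thesis by (simp add: PR)
qed

lemma uniq: "a \<in> W \<Longrightarrow> N a \<noteq> 0 \<Longrightarrow> p \<in> D \<Longrightarrow> q \<in> D \<Longrightarrow>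
   P (p + q \<odot> a) = p \<and> Q a (p + q \<odot> a) = q"
proof -
  assume a: "a \<in> W" "N a \<noteq> 0" and p: "p \<in> D" and q: "q \<in> D"
  have tp: "t p = p" using p unfolding D_def by simp
  have tq: "t (q \<odot> a) = - (q \<odot> a)" using DW[OF q a(1)] unfolding W_def by simp
  have "P (p + q \<odot> a) = p" unfolding P_def using tp tq by (simp add: half_double)
  moreover have "R (p + q \<odot> a) = q \<odot> a" unfolding R_def using tp tq
    by (simp add: half_double)
  then have "Q a (p + q \<odot> a) = q" unfolding Q_def using a by (simp add: rinvW TW)
  ultimately show ?thesis by simp
qed

lemma bigW: "\<exists>A. A \<subseteq> W \<and> V.independent A \<and> finite A \<and> 4 \<le> card A"
proof -
  obtain a where a: "a \<in> W" "N a \<noteq> 0" using exW by blast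
  obtain BD where BD: "BD \<subseteq> D" "V.independent BD" "D \<subseteq> V.span BD" by (metis V.basis_exists)
  obtain BW where BW: "BW \<subseteq> W" "V.independent BW" "W \<subseteq> V.span BW" by (metis V.basis_exists)
  have fD: "finite BD" using indep_bound BD(2) by blast
  have fW: "finite BW" using indep_bound BW(2) by blast
  have "UNIV \<subseteq> V.span (BD \<union> BW)"
  proof
    fix x
    have "P x \<in> V.span (BD \<union> BW)" using PD BD(3) V.span_mono[of BD "BD \<union> BW"] by blast
    moreover have "R x \<in> V.span (BD \<union> BW)" using RW BW(3) V.span_mono[of BW "BD \<union> BW"] by blast
    ultimately show "x \<in> V.span (BD \<union> BW)" using PR[of x] V.span_add by metis
  qed
  then have "8 \<le> card (BD \<union> BW)" using span_bound fD fW by blast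
  also have "\<dots> \<le> card BD + card BW" by (rule card_Un_le)
  finally have c1: "8 \<le> card BD + card BW" .
  have "D \<subseteq> V.span ((\<lambda>v. v \<odot> a) ` BW)"
  proof
    fix d assume d: "d \<in> D"
    have "d \<odot> a \<in> V.span BW" using DW[OF d a(1)] BW(3) by blast
    then have "(d \<odot> a) \<odot> a \<in> (\<lambda>v. v \<odot> a) ` V.span BW" by blast
    also have "\<dots> = V.span ((\<lambda>v. v \<odot> a) ` BW)" using module_hom.span_image[OF mhr] by metis
    finally have "(d \<odot> a) \<odot> a \<in> V.span ((\<lambda>v. v \<odot> a) ` BW)" .
    then have "(- (1 / N a)) \<star> ((d \<odot> a) \<odot> a) \<in> V.span ((\<lambda>v. v \<odot> a) ` BW)" by (rule V.span_scale)
    moreover have "(- (1 / N a)) \<star> ((d \<odot> a) \<odot> a) = d" using a by (simp add: rinvW TW)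
    ultimately show "d \<in> V.span ((\<lambda>v. v \<odot> a) ` BW)" by simp
  qed
  then have "BD \<subseteq> V.span ((\<lambda>v. v \<odot> a) ` BW)" using BD(1) by blast
  then have "card BD \<le> card ((\<lambda>v. v \<odot> a) ` BW)"
    using V.independent_span_bound[OF finite_imageI[OF fW] BD(2)] by blast
  also have "\<dots> \<le> card BW" using fW by (rule card_image_le)
  finally have "4 \<le> card BW" using c1 by linarith
  then show ?thesis using BW fW by blast
qed

lemma Padd[simp]: "P (x + y) = P x + P y" unfolding P_def by (simp add: algebra_simps)
lemma Pscale[simp]: "P (c \<star> x) = c \<star> P x" unfolding P_def by (simp add: algebra_simps)
lemma Radd[simp]: "R (x + y) = R x + R y" unfolding R_def by (simp add: algebra_simps)
lemma Rscale[simp]: "R (c \<star> x) = c \<star> R x" unfolding R_def by (simp add: algebra_simps)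
lemma Qadd[simp]: "Q a (x + y) = Q a x + Q a y" unfolding Q_def by (simp add: algebra_simps)
lemma Qscale[simp]: "Q a (c \<star> x) = c \<star> Q a x" unfolding Q_def by (simp add: algebra_simps)
lemma PW: "x \<in> W \<Longrightarrow> P x = 0" unfolding P_def W_def by simp

end

locale twoinv = comp scale mult e N + Ss: invol scale mult e N s + Tt: invol scale mult e N t
  for scale :: "'k::field \<Rightarrow> 'c::ab_group_add \<Rightarrow> 'c" (infixr "\<star>" 75)
    and mult :: "'c \<Rightarrow> 'c \<Rightarrow> 'c" (infixl "\<odot>" 70)
    and e :: 'c and N :: "'c \<Rightarrow> 'k" and s t :: "'c \<Rightarrow> 'c"
begin

lemma inter: "\<exists>w. w \<in> Tt.W \<and> w \<in> Ss.W \<and> w \<noteq> 0"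
proof (rule ccontr)
  assume h: "\<not> ?thesis"
  then have disj: "\<And>w. w \<in> Tt.W \<Longrightarrow> w \<in> Ss.W \<Longrightarrow> w = 0" by blast
  obtain A where A: "A \<subseteq> Tt.W" "V.independent A" "finite A" "4 \<le> card A" using Tt.bigW by blast
  obtain B' where B': "B' \<subseteq> Ss.W" "V.independent B'" "finite B'" "4 \<le> card B'" using Ss.bigW by blast
  have iAB: "V.independent (A \<union> B')"
    by (rule indep_union[OF A(2) B'(2) A(1) B'(1) Tt.subW Ss.subW disj])
  have dAB: "A \<inter> B' = {}"
  proof (rule ccontr)
    assume "A \<inter> B' \<noteq> {}"
    then obtain x where "x \<in> A" "x \<in> B'" by blast
    then have "x = 0" "x \<in> A" using disj A(1) B'(1) by auto
    then show False using A(2) V.dependent_zero by blast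
  qed
  have sub: "A \<union> B' \<subseteq> {x. T x = 0}" using A(1) B'(1) Tt.TW Ss.TW by blast
  have "V.span (A \<union> B') \<subseteq> {x. T x = 0}" by (rule V.span_minimal[OF sub subC0])
  then have ne: "e \<notin> V.span (A \<union> B')" using two by auto
  then have ie: "V.independent (insert e (A \<union> B'))" by (rule V.independent_insertI[OF _ iAB])
  have "e \<notin> A \<union> B'" using ne V.span_superset by blast
  then have "card (insert e (A \<union> B')) = Suc (card A + card B')"
    using A(3) B'(3) dAB by (simp add: card_Un_disjoint)
  moreover have "card (insert e (A \<union> B')) \<le> 8" using indep_bound[OF ie] by blast
  ultimately show False using A(4) B'(4) by linarith
qed

lemma find_aa: "\<exists>a a'. a \<in> Tt.W \<and> a' \<in> Ss.W \<and> N a \<noteq> 0 \<and> N a' = N a"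
proof -
  obtain w where w: "w \<in> Tt.W" "w \<in> Ss.W" "w \<noteq> 0" using inter by blast
  show ?thesis
  proof (cases "N w = 0")
    case False
    then show ?thesis using w by blast
  next
    case True
    obtain a0 where a0: "a0 \<in> Tt.W" "N a0 \<noteq> 0" using Tt.exW by blast
    obtain a1 where a1: "a1 \<in> Ss.W" "N a1 \<noteq> 0" using Ss.exW by blast
    define d where "d = Ss.Q a1 w"
    have dD: "d \<in> Ss.D" unfolding d_def using a1(1) by (rule Ss.QD)
    have wd: "w = d \<odot> a1" using Ss.decomp[OF a1, of w] Ss.PW[OF w(2)] unfolding d_def by simp
    have Nd: "N d = 0" using True a1(2) multN[of d a1] wd by simp
    have dn: "d \<noteq> 0" using wd w(3) by auto
    obtain z where z: "z \<in> Ss.D" "B d z \<noteq> 0"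
    proof (rule ccontr)
      assume "\<not> thesis"
      then have hz: "\<And>z. z \<in> Ss.D \<Longrightarrow> B d z = 0" using that by blast
      have "B d y = 0" for y
      proof -
        have "B d y = B d (Ss.P y) + B d (Ss.R y)" by (simp flip: Badd2 add: Ss.PR)
        then show ?thesis using hz[OF Ss.PD] Ss.BDW[OF dD Ss.RW] by simp
      qed
      then show False using dn nondeg by blast
    qed
    define c where "c = N a0 / N a1"
    define l where "l = (c - N z) / B d z"
    define d' where "d' = l \<star> d + z"
    have d'D: "d' \<in> Ss.D" unfolding d'_def using dD z(1) by (intro Ss.Dadd Ss.Dscale)
    have "N d' = c" unfolding d'_def l_def using Nd z(2) by (simp add: Nadd field_simps Bsym[of z d])
    then have "N (d' \<odot> a1) = N a0" using a1(2) by (simp add: multN c_def)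
    moreover have "d' \<odot> a1 \<in> Ss.W" by (rule Ss.DW[OF d'D a1(1)])
    ultimately show ?thesis using a0 by blast
  qed
qed

end

locale ext = twoinv scale mult e N s t
  for scale :: "'k::field \<Rightarrow> 'c::ab_group_add \<Rightarrow> 'c" (infixr "\<star>" 75)
    and mult :: "'c \<Rightarrow> 'c \<Rightarrow> 'c" (infixl "\<odot>" 70)
    and e :: 'c and N :: "'c \<Rightarrow> 'k" and s t :: "'c \<Rightarrow> 'c" +
  fixes a a' :: 'c and f :: "'c \<Rightarrow> 'c"
  assumes aW: "a \<in> Tt.W" and Na: "N a \<noteq> 0" and a'W: "a' \<in> Ss.W" and Na': "N a' = N a"
    and fb: "bij_betw f Tt.D Ss.D"
    and fadd: "\<And>x y. x \<in> Tt.D \<Longrightarrow> y \<in> Tt.D \<Longrightarrow> f (x + y) = f x + f y"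
    and fsc: "\<And>c x. x \<in> Tt.D \<Longrightarrow> f (c \<star> x) = c \<star> f x"
    and fm: "\<And>x y. x \<in> Tt.D \<Longrightarrow> y \<in> Tt.D \<Longrightarrow> f (x \<odot> y) = f x \<odot> f y"
    and fe: "f e = e"
begin

lemma Na'0: "N a' \<noteq> 0" using Na Na' by simp

lemma fin: "x \<in> Tt.D \<Longrightarrow> f x \<in> Ss.D" using fb bij_betwE by blast

lemma fdiff: "x \<in> Tt.D \<Longrightarrow> y \<in> Tt.D \<Longrightarrow> f (x - y) = f x - f y"
  using fadd[of "x - y" y] Tt.Ddiff by (metis add_diff_cancel diff_add_cancel)

lemma fT: assumes x: "x \<in> Tt.D" shows "T (f x) = T x"
proof (rule ccontr)
  assume ne: "T (f x) \<noteq> T x"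
  have "f (x \<odot> x) = f (T x \<star> x - N x \<star> e)" by (simp add: quad)
  also have "\<dots> = T x \<star> f x - N x \<star> e" using x by (simp add: fdiff fsc Tt.Dscale fe)
  finally have "f x \<odot> f x = T x \<star> f x - N x \<star> e" using fm[OF x x] by simp
  moreover have "f x \<odot> f x = T (f x) \<star> f x - N (f x) \<star> e" by (rule quad)
  ultimately have "(T (f x) - T x) \<star> f x = (N (f x) - N x) \<star> e" by (simp add: algebra_simps)
  then have "(1 / (T (f x) - T x)) \<star> ((T (f x) - T x) \<star> f x) = (1 / (T (f x) - T x)) \<star> ((N (f x) - N x) \<star> e)"
    by simp
  then have fx: "f x = ((N (f x) - N x) / (T (f x) - T x)) \<star> e" using ne by simp
  define c where "c = (N (f x) - N x) / (T (f x) - T x)"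
  have "f (c \<star> e) = f x" using fx fsc[OF Tt.eD, of c] fe unfolding c_def by simp
  moreover have "c \<star> e \<in> Tt.D" by (rule Tt.Dscale[OF Tt.eD])
  ultimately have "c \<star> e = x" using fb x unfolding bij_betw_def inj_on_def by blast
  then have "T x = T (f x)" using fx unfolding c_def by auto
  then show False using ne by simp
qed

lemma fcj: "x \<in> Tt.D \<Longrightarrow> f (cj x) = cj (f x)"
  unfolding cj_def by (simp add: fdiff fsc Tt.Dscale fe fT)

definition g where "g z = f (Tt.P z) + f (Tt.Q a z) \<odot> a'"

definition fi where "fi = inv_into Tt.D f"
lemma fi_in: "y \<in> Ss.D \<Longrightarrow> fi y \<in> Tt.D" unfolding fi_def using fb
  by (metis bij_betw_def inv_into_into)
lemma f_fi: "y \<in> Ss.D \<Longrightarrow> f (fi y) = y" unfolding fi_def using fb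
  by (metis bij_betw_def f_inv_into_f)
lemma fi_f: "x \<in> Tt.D \<Longrightarrow> fi (f x) = x" unfolding fi_def using fb
  by (metis bij_betw_def inv_into_f_f)

definition h where "h z = fi (Ss.P z) + fi (Ss.Q a' z) \<odot> a"

lemma hg: "h (g z) = z"
proof -
  have u: "Ss.P (g z) = f (Tt.P z) \<and> Ss.Q a' (g z) = f (Tt.Q a z)"
    unfolding g_def by (rule Ss.uniq[OF a'W Na'0 fin[OF Tt.PD] fin[OF Tt.QD[OF aW]]])
  have "h (g z) = Tt.P z + Tt.Q a z \<odot> a" unfolding h_def using u
    by (simp add: fi_f Tt.PD Tt.QD[OF aW])
  also have "\<dots> = z" by (rule Tt.decomp[OF aW Na, symmetric])
  finally show ?thesis .
qed

lemma gh: "g (h z) = z"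
proof -
  have u: "Tt.P (h z) = fi (Ss.P z) \<and> Tt.Q a (h z) = fi (Ss.Q a' z)"
    unfolding h_def by (rule Tt.uniq[OF aW Na fi_in[OF Ss.PD] fi_in[OF Ss.QD[OF a'W]]])
  have "g (h z) = Ss.P z + Ss.Q a' z \<odot> a'" unfolding g_def using u
    by (simp add: f_fi Ss.PD Ss.QD[OF a'W])
  also have "\<dots> = z" by (rule Ss.decomp[OF a'W Na'0, symmetric])
  finally show ?thesis .
qed

lemma gbij: "bij g"
  unfolding bij_def inj_def surj_def by (metis hg gh)

lemma gadd: "g (x + y) = g x + g y"
  unfolding g_def by (simp add: fadd Tt.PD Tt.QD[OF aW] algebra_simps)

lemma gscale: "g (c \<star> x) = c \<star> g x"
  unfolding g_def by (simp add: fsc Tt.PD Tt.QD[OF aW] algebra_simps)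

lemma glin: "Vector_Spaces.linear scale scale g"
  unfolding Vector_Spaces.linear_iff using vs gadd gscale by blast

lemma gmult: "g (z1 \<odot> z2) = g z1 \<odot> g z2"
proof -
  define p1 q1 p2 q2 where "p1 = Tt.P z1" "q1 = Tt.Q a z1" "p2 = Tt.P z2" "q2 = Tt.Q a z2"
  have D: "p1 \<in> Tt.D" "q1 \<in> Tt.D" "p2 \<in> Tt.D" "q2 \<in> Tt.D"
    unfolding p1_q1_p2_q2_def by (simp_all add: Tt.PD Tt.QD[OF aW])
  have z: "z1 = p1 + q1 \<odot> a" "z2 = p2 + q2 \<odot> a"
    unfolding p1_q1_p2_q2_def by (simp_all flip: Tt.decomp[OF aW Na])
  define X Y where "X = p1 \<odot> p2 - N a \<star> (cj q2 \<odot> q1)" "Y = q2 \<odot> p1 + q1 \<odot> cj p2"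
  have XY: "X \<in> Tt.D" "Y \<in> Tt.D" unfolding X_Y_def using D
    by (auto intro!: Tt.DD Tt.Ddiff Tt.Dadd Tt.Dscale Tt.cjD)
  have prod: "z1 \<odot> z2 = X + Y \<odot> a" unfolding z X_Y_def by (rule Tt.prod[OF D(1,2,3,4) aW])
  have u: "Tt.P (z1 \<odot> z2) = X \<and> Tt.Q a (z1 \<odot> z2) = Y"
    unfolding prod by (rule Tt.uniq[OF aW Na XY])
  have fX: "f X = f p1 \<odot> f p2 - N a \<star> (cj (f q2) \<odot> f q1)"
    unfolding X_Y_def using D
    by (simp add: fdiff fm fsc fcj Tt.DD Tt.Dscale Tt.cjD)
  have fY: "f Y = f q2 \<odot> f p1 + f q1 \<odot> cj (f p2)"
    unfolding X_Y_def using D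
    by (simp add: fadd fm fcj Tt.DD Tt.cjD)
  have gz: "g z1 = f p1 + f q1 \<odot> a'" "g z2 = f p2 + f q2 \<odot> a'"
    unfolding g_def p1_q1_p2_q2_def by simp_all
  have "g z1 \<odot> g z2 = (f p1 \<odot> f p2 - N a' \<star> (cj (f q2) \<odot> f q1)) + (f q2 \<odot> f p1 + f q1 \<odot> cj (f p2)) \<odot> a'"
    unfolding gz using D by (intro Ss.prod fin a'W)
  then show ?thesis unfolding g_def using u fX fY Na' by simp
qed

lemma gconj: "s (g z) = g (t z)"
proof -
  have tz: "t z = Tt.P z + (- Tt.Q a z) \<odot> a"
  proof -
    have "t z = t (Tt.P z + Tt.Q a z \<odot> a)" using Tt.decomp[OF aW Na, of z] by simp
    also have "\<dots> = Tt.P z + (- Tt.Q a z) \<odot> a"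
      using Tt.PD[of z] Tt.QD[OF aW, of z] aW unfolding Tt.D_def Tt.W_def by (simp add: Tt.tmult)
    finally show ?thesis .
  qed
  have u: "Tt.P (t z) = Tt.P z \<and> Tt.Q a (t z) = - Tt.Q a z"
    unfolding tz by (rule Tt.uniq[OF aW Na Tt.PD Tt.Dneg[OF Tt.QD[OF aW]]])
  have "s (g z) = f (Tt.P z) - f (Tt.Q a z) \<odot> a'"
    unfolding g_def using fin[OF Tt.PD] fin[OF Tt.QD[OF aW]] a'W
    unfolding Ss.D_def Ss.W_def by (simp add: Ss.tmult)
  also have "\<dots> = g (t z)" unfolding g_def
    using fsc[OF Tt.QD[OF aW], of "-1"] u by simp
  finally show ?thesis .
qed

end


lemma fwd:
  assumes g: "is_aut scale mult g" and sg: "s = g \<circ> t \<circ> inv g"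
    and unitl: "\<And>x. mult e x = x" and unitr: "\<And>x. mult x e = x"
  shows "alg_iso_on scale mult e (fixed_subalgebra t) (fixed_subalgebra s) g"
proof -
  have bg: "bij g" and lg: "Vector_Spaces.linear scale scale g"
    and mg: "\<And>x y. g (mult x y) = mult (g x) (g y)" using g unfolding is_aut_def by auto
  have ig: "\<And>x. inv g (g x) = x" using bg by (simp add: bij_is_inj)
  have gi: "\<And>y. g (inv g y) = y" using bg by (simp add: bij_is_surj surj_f_inv_f)
  have hom: "module_hom scale scale g" using module_hom_linearI[OF lg] .
  have fx: "\<And>x. t x = x \<Longrightarrow> s (g x) = g x" using sg ig by simp
  have fy: "\<And>y. s y = y \<Longrightarrow> t (inv g y) = inv g y"
  proof -
    fix y assume "s y = y"
    then have "g (t (inv g y)) = g (inv g y)" using sg gi by simp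
    then show "t (inv g y) = inv g y" using bg by (metis ig)
  qed
  have bb: "bij_betw g (fixed_subalgebra t) (fixed_subalgebra s)"
    unfolding bij_betw_def fixed_subalgebra_def
  proof
    show "inj_on g {x. t x = x}" using bg by (metis bij_is_inj inj_on_subset subset_UNIV)
    show "g ` {x. t x = x} = {x. s x = x}"
    proof
      show "g ` {x. t x = x} \<subseteq> {x. s x = x}" using fx by auto
      show "{x. s x = x} \<subseteq> g ` {x. t x = x}"
      proof
        fix y assume "y \<in> {x. s x = x}"
        then have "t (inv g y) = inv g y" using fy by simp
        then show "y \<in> g ` {x. t x = x}" using gi by (metis (mono_tags) image_eqI mem_Collect_eq)
      qed
    qed
  qed
  have ge: "g e = e"
  proof -
    have "mult (g e) y = y" for y using mg[of e "inv g y"] gi unitl by metis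
    then show ?thesis using unitr by metis
  qed
  show ?thesis unfolding alg_iso_on_def
    using bb ge mg module_hom.add[OF hom] module_hom.scale[OF hom] by blast
qed

theorem mainTheorem2:
  fixes scale :: "'k::field \<Rightarrow> 'c::ab_group_add \<Rightarrow> 'c"
    and mult :: "'c \<Rightarrow> 'c \<Rightarrow> 'c" and e :: 'c and N :: "'c \<Rightarrow> 'k"
    and s t :: "'c \<Rightarrow> 'c"
  assumes "(2::'k) \<noteq> 0"
    and "octonion_algebra scale mult e N"
    and "is_aut scale mult s" and "order_two s"
    and "is_aut scale mult t" and "order_two t"
  shows "(\<exists>g. is_aut scale mult g \<and> s = g \<circ> t \<circ> inv g) \<longleftrightarrow>
         (\<exists>f. alg_iso_on scale mult e (fixed_subalgebra t) (fixed_subalgebra s) f)"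
proof -
  note oa = assms(2)[unfolded octonion_algebra_def unital_algebra_def]
  have tlin: "Vector_Spaces.linear scale scale t" and tm: "\<And>x y. t (mult x y) = mult (t x) (t y)"
    using assms(5) unfolding is_aut_def by auto
  have slin: "Vector_Spaces.linear scale scale s" and sm: "\<And>x y. s (mult x y) = mult (s x) (s y)"
    using assms(3) unfolding is_aut_def by auto
  have tt: "\<And>x. t (t x) = x" and tn: "\<exists>x. t x \<noteq> x"
    using assms(6) unfolding order_two_def by (auto simp: fun_eq_iff)
  have ss: "\<And>x. s (s x) = x" and sn: "\<exists>x. s x \<noteq> x"
    using assms(4) unfolding order_two_def by (auto simp: fun_eq_iff)
  have nontriv: "\<exists>x::'c. x \<noteq> 0"
  proof -
    obtain x where "t x \<noteq> x" using tn by blast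
    moreover have "t 0 = 0" using module_hom.zero[OF module_hom_linearI[OF tlin]] .
    ultimately show ?thesis by metis
  qed
  have C: "comp scale mult e N" unfolding comp_def using oa assms(1) nontriv by auto
  have IT: "invol scale mult e N t" unfolding invol_def invol_axioms_def using C tlin tm tt tn by auto
  have IS: "invol scale mult e N s" unfolding invol_def invol_axioms_def using C slin sm ss sn by auto
  have TI: "twoinv scale mult e N s t" unfolding twoinv_def using C IS IT by auto
  interpret twoinv scale mult e N s t by (rule TI)
  have fixt: "fixed_subalgebra t = Tt.D" unfolding fixed_subalgebra_def Tt.D_def ..
  have fixs: "fixed_subalgebra s = Ss.D" unfolding fixed_subalgebra_def Ss.D_def ..
  show ?thesis
  proof
    assume "\<exists>g. is_aut scale mult g \<and> s = g \<circ> t \<circ> inv g"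
    then obtain g where "is_aut scale mult g" "s = g \<circ> t \<circ> inv g" by blast
    then show "\<exists>f. alg_iso_on scale mult e (fixed_subalgebra t) (fixed_subalgebra s) f"
      using fwd[of scale mult g s t e] oa by blast
  next
    assume "\<exists>f. alg_iso_on scale mult e (fixed_subalgebra t) (fixed_subalgebra s) f"
    then obtain f where f: "alg_iso_on scale mult e Tt.D Ss.D f" unfolding fixt fixs by blast
    obtain a a' where aa: "a \<in> Tt.W" "a' \<in> Ss.W" "N a \<noteq> 0" "N a' = N a" using find_aa by blast
    have EX: "ext scale mult e N s t a a' f"
      unfolding ext_def ext_axioms_def using TI aa f unfolding alg_iso_on_def by auto
    interpret ext scale mult e N s t a a' f by (rule EX)
    have "is_aut scale mult g" unfolding is_aut_def using gbij glin gmult by blast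
    moreover have "s = g \<circ> t \<circ> inv g"
    proof
      fix z
      have "g (inv g z) = z" using gbij by (simp add: bij_is_surj surj_f_inv_f)
      then show "s z = (g \<circ> t \<circ> inv g) z" using gconj by (metis comp_apply)
    qed
    ultimately show "\<exists>g. is_aut scale mult g \<and> s = g \<circ> t \<circ> inv g" by blast
  qed
qed

end
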